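(* Let $N\to\infty$, $p=p(N)$ with $p(1-p)N\to\infty$, and $S=S(N)$, $h=h(N)$ such that $N-S$ and $N+S$ are nonnegative integers, $2(2p(1-p)N)^{1/2}<h=o((p(1-p)N)^{2/3})$ and $hS=o(N(p(1-p)N)^{1/2})$. Let $X_1\sim B(N-S,p)$ and $X_2\sim B(N+S,1-p)$ be independent with means $\mu_1,\mu_2$. Then $$\mathbb{P}(X_1+X_2\ge\mu_1+\mu_2+h)>\frac{\sqrt{2p(1-p)N}}{2\pi h}\exp\!\left(-\frac{h^2}{4p(1-p)N}-4-o(1)\right),$$ where $o(1)\to0$ as $N\to\infty$.
   Context: $B(n,p)$ denotes a binomial random variable with parameters $n$ and $p$. *)

theory Defs
  imports "HOL-Probability.Probability" "HOL-Library.Landau_Symbols"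
begin

definition binom_sum_tail :: "nat \<Rightarrow> nat \<Rightarrow> real \<Rightarrow> real \<Rightarrow> real" where
  "binom_sum_tail n1 n2 p t =
     measure_pmf.prob (pair_pmf (binomial_pmf n1 p) (binomial_pmf n2 (1 - p)))
       {(x1, x2). real x1 + real x2 \<ge> t}"

end

theory Submission
  imports Defs
begin


definition bs :: "nat \<Rightarrow> real \<Rightarrow> (nat \<Rightarrow> real) \<Rightarrow> real" where
  "bs n p g = (\<Sum>k\<le>n. real (n choose k) * p^k * (1-p)^(n-k) * g k)"

lemma bs_Suc: "bs (Suc n) p g = p * bs n p (\<lambda>k. g (Suc k)) + (1-p) * bs n p g"
proof -
  let ?q = "1 - p"
  have e1: "bs (Suc n) p g = ?q^(Suc n) * g 0 + (\<Sum>j\<le>n. real (Suc n choose Suc j) * p^Suc j * ?q^(n-j) * g (Suc j))"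
    unfolding bs_def by (subst sum.atMost_Suc_shift) simp
  have e2: "(\<Sum>j\<le>n. real (Suc n choose Suc j) * p^Suc j * ?q^(n-j) * g (Suc j))
     = (\<Sum>j\<le>n. real (n choose j) * p^Suc j * ?q^(n-j) * g (Suc j))
       + (\<Sum>j\<le>n. real (n choose Suc j) * p^Suc j * ?q^(n-j) * g (Suc j))"
    by (simp add: sum.distrib[symmetric] algebra_simps)
  have e3: "(\<Sum>j\<le>n. real (n choose j) * p^Suc j * ?q^(n-j) * g (Suc j)) = p * bs n p (\<lambda>k. g (Suc k))"
    unfolding bs_def by (simp add: sum_distrib_left algebra_simps)
  have e4: "?q^(Suc n) * g 0 + (\<Sum>j\<le>n. real (n choose Suc j) * p^Suc j * ?q^(n-j) * g (Suc j))
      = ?q * bs n p g"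
  proof -
    have "bs n p g = ?q^n * g 0 + (\<Sum>j<n. real (n choose Suc j) * p^Suc j * ?q^(n - Suc j) * g (Suc j))"
      unfolding bs_def lessThan_Suc_atMost[symmetric] sum.lessThan_Suc_shift by simp
    moreover have "(\<Sum>j\<le>n. real (n choose Suc j) * p^Suc j * ?q^(n-j) * g (Suc j))
        = (\<Sum>j<n. real (n choose Suc j) * p^Suc j * ?q^(n-j) * g (Suc j))"
      by (simp add: lessThan_Suc_atMost[symmetric])
    moreover have "(\<Sum>j<n. real (n choose Suc j) * p^Suc j * ?q^(n-j) * g (Suc j))
       = ?q * (\<Sum>j<n. real (n choose Suc j) * p^Suc j * ?q^(n - Suc j) * g (Suc j))"
      unfolding sum_distrib_left
      by (rule sum.cong) (auto simp: Suc_diff_Suc[symmetric])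
    ultimately show ?thesis by (simp add: algebra_simps)
  qed
  show ?thesis using e1 e2 e3 e4 by simp
qed

lemma bs_add: "bs n p (\<lambda>k. f k + g k) = bs n p f + bs n p g"
  unfolding bs_def by (simp add: sum.distrib algebra_simps)

lemma bs_cmult: "bs n p (\<lambda>k. c * f k) = c * bs n p f"
  unfolding bs_def by (simp add: sum_distrib_left algebra_simps)

lemma bs_const: "bs n p (\<lambda>k. c) = c"
proof -
  have "bs n p (\<lambda>k. c) = c * (\<Sum>k\<le>n. real (n choose k) * p^k * (1-p)^(n-k))"
    unfolding bs_def by (simp add: sum_distrib_left algebra_simps)
  also have "(\<Sum>k\<le>n. real (n choose k) * p^k * (1-p)^(n-k)) = (p + (1-p))^n"
    by (subst binomial_ring) (simp add: atLeast0AtMost)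
  finally show ?thesis by simp
qed

lemma bs_mean: "bs n p real = n * p"
proof (induction n)
  case 0 show ?case by (simp add: bs_def)
next
  case (Suc n)
  have "bs (Suc n) p real = p * bs n p (\<lambda>k. 1 + real k) + (1-p) * bs n p real"
    by (subst bs_Suc) simp
  also have "bs n p (\<lambda>k. 1 + real k) = 1 + n*p"
    by (simp only: bs_add bs_const) (simp add: Suc[unfolded o_def] o_def)
  also have "bs n p real = n * p" by (rule Suc)
  finally show ?case by (simp add: algebra_simps)
qed

lemma bs_mean': "bs n p (\<lambda>k. real k) = n * p"
  using bs_mean by (simp add: o_def)

lemma bs_sq: "bs n p (\<lambda>k. real k ^ 2) = n * p * (1-p) + (n*p)^2"
proof (induction n)
  case 0 show ?case by (simp add: bs_def)
next
  case (Suc n)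
  have "bs (Suc n) p (\<lambda>k. real k ^ 2) = p * bs n p (\<lambda>k. real k ^ 2 + (2 * real k + 1)) + (1-p) * bs n p (\<lambda>k. real k ^ 2)"
    by (subst bs_Suc) (simp add: power2_eq_square algebra_simps)
  also have "bs n p (\<lambda>k. real k ^ 2 + (2 * real k + 1)) = n * p * (1-p) + (n*p)^2 + (2 * (n*p) + 1)"
    by (simp only: bs_add bs_cmult bs_const bs_mean' Suc)
  also have "bs n p (\<lambda>k. real k ^ 2) = n * p * (1-p) + (n*p)^2" by (rule Suc)
  finally show ?case by (simp add: power2_eq_square algebra_simps)
qed

lemma bs_var: "bs n p (\<lambda>k. (real k - n*p) ^ 2) = n * p * (1-p)"
proof -
  have "bs n p (\<lambda>k. (real k - n*p) ^ 2) = bs n p (\<lambda>k. real k ^ 2 + ((- 2 * (n*p)) * real k + (n*p)^2))"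
    by (simp add: power2_eq_square algebra_simps)
  also have "\<dots> = n * p * (1-p) + (n*p)^2 + ((- 2 * (n*p)) * (n*p) + (n*p)^2)"
    by (simp only: bs_add bs_cmult bs_const bs_mean' bs_sq)
  finally show ?thesis by (simp add: power2_eq_square algebra_simps)
qed

lemma card_nat_ivl_upper:
  fixes lo hi :: real
  assumes "K \<subseteq> {k::nat. lo \<le> real k \<and> real k \<le> hi}" "lo \<le> hi"
  shows "real (card K) \<le> hi - lo + 1"
proof -
  have sub: "K \<subseteq> {nat \<lceil>lo\<rceil> .. nat \<lfloor>hi\<rfloor>}"
    using assms(1) by (auto simp: le_nat_iff nat_le_iff ceiling_le_iff le_floor_iff)
  have "card K \<le> card {nat \<lceil>lo\<rceil> .. nat \<lfloor>hi\<rfloor>}" by (rule card_mono[OF _ sub]) simp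
  also have "\<dots> = nat \<lfloor>hi\<rfloor> + 1 - nat \<lceil>lo\<rceil>" by simp
  finally have c: "card K \<le> nat \<lfloor>hi\<rfloor> + 1 - nat \<lceil>lo\<rceil>" .
  show ?thesis
  proof (cases "hi < 0")
    case True
    then have "K = {}" using assms(1) by force
    then show ?thesis using assms by simp
  next
    case False
    have "real (nat \<lfloor>hi\<rfloor> + 1 - nat \<lceil>lo\<rceil>) \<le> hi - lo + 1"
    proof (cases "lo < 0")
      case True
      then show ?thesis using False by (simp add: of_nat_diff) linarith
    next
      case F2: False
      then show ?thesis using False assms(2)
        by (simp add: of_nat_diff) linarith
    qed
    then show ?thesis using c by (meson of_nat_le_iff order_trans)
  qed
qed

lemma card_nat_ivl_lower:
  fixes lo hi :: real
  assumes "0 \<le> lo" "lo \<le> hi"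
  shows "real (card {k::nat. lo \<le> real k \<and> real k \<le> hi}) \<ge> hi - lo - 1"
proof -
  have eq: "{k::nat. lo \<le> real k \<and> real k \<le> hi} = {nat \<lceil>lo\<rceil> .. nat \<lfloor>hi\<rfloor>}"
    using assms by (auto simp: le_nat_iff nat_le_iff ceiling_le_iff le_floor_iff)
  show ?thesis unfolding eq using assms by (simp add: of_nat_diff) linarith
qed

lemma sum_pmf_binomial_bs:
  assumes "0 \<le> p" "p \<le> 1"
  shows "(\<Sum>k\<le>n. pmf (binomial_pmf n p) k * g k) = bs n p g"
  using assms unfolding bs_def by simp

lemma mode_exists:
  fixes n :: nat and p vr :: real
  assumes p: "0 < p" "p < 1" and vr: "vr = real n * p * (1-p)" "0 < vr"
  shows "\<exists>m. m \<le> n \<and> \<bar>real m - real n*p\<bar> \<le> 2 * sqrt vr \<and>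
             pmf (binomial_pmf n p) m \<ge> (3/4) / (4 * sqrt vr + 1)"
proof (rule ccontr)
  assume H: "\<not> ?thesis"
  define b where "b = pmf (binomial_pmf n p)"
  define T where "T = {k \<in> {..n}. \<bar>real k - real n*p\<bar> \<le> 2 * sqrt vr}"
  have fT: "finite T" unfolding T_def by simp
  have Tsub: "T \<subseteq> {..n}" unfolding T_def by auto
  have tot: "(\<Sum>k\<le>n. b k) = 1"
    using sum_pmf_binomial_bs[of p n "\<lambda>_. 1"] p bs_const[of n p 1] unfolding b_def by simp
  have var: "(\<Sum>k\<le>n. b k * (real k - real n*p)^2) = vr"
    using sum_pmf_binomial_bs[of p n "\<lambda>k. (real k - real n*p)^2"] p bs_var[of n p] vr unfolding b_def by simp
  have bnn: "b k \<ge> 0" for k unfolding b_def by simp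
  have "(\<Sum>k\<in>({..n} - T). b k) \<le> (\<Sum>k\<in>({..n} - T). b k * ((real k - real n*p)^2 / (4* vr)))"
  proof (rule sum_mono)
    fix k assume "k \<in> {..n} - T"
    then have "\<bar>real k - real n*p\<bar> > 2 * sqrt vr" unfolding T_def by auto
    then have "(2 * sqrt vr)^2 < \<bar>real k - real n*p\<bar>^2"
      using vr by (intro power_strict_mono) auto
    then have "(2 * sqrt vr)^2 < (real k - real n*p)^2" by simp
    then have "4 * vr < (real k - real n*p)^2" using vr by (simp add: power2_eq_square)
    then have "1 \<le> (real k - real n*p)^2 / (4* vr)" using vr by simp
    from mult_left_mono[OF this bnn[of k]]
    show "b k \<le> b k * ((real k - real n*p)^2 / (4* vr))" by simp
  qed
  also have "\<dots> \<le> (\<Sum>k\<le>n. b k * ((real k - real n*p)^2 / (4* vr)))"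
    using vr bnn by (intro sum_mono2) (auto intro!: mult_nonneg_nonneg divide_nonneg_pos)
  also have "\<dots> = (\<Sum>k\<le>n. b k * (real k - real n*p)^2) / (4* vr)"
    by (simp add: sum_divide_distrib)
  also have "\<dots> = 1/4" using var vr(2) by simp
  finally have out: "(\<Sum>k\<in>({..n} - T). b k) \<le> 1/4" .
  have "(\<Sum>k\<le>n. b k) = (\<Sum>k\<in>T. b k) + (\<Sum>k\<in>({..n} - T). b k)"
    using sum.subset_diff[OF Tsub, of b] by simp
  then have inT: "(\<Sum>k\<in>T. b k) \<ge> 3/4" using tot out by linarith
  then have Tne: "T \<noteq> {}" by auto
  define c0 where "c0 = (3/4) / (4 * sqrt vr + 1)"
  have small: "b k < c0" if "k \<in> T" for k
    using H that unfolding T_def b_def c0_def by force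
  have cT: "real (card T) \<le> (real n*p + 2* sqrt vr) - (real n*p - 2* sqrt vr) + 1"
    using vr by (intro card_nat_ivl_upper) (auto simp: T_def abs_le_iff)
  have "(\<Sum>k\<in>T. b k) < (\<Sum>k\<in>T. c0)"
    by (rule sum_strict_mono[OF fT Tne small])
  also have "\<dots> = real (card T) * c0" by simp
  also have "\<dots> \<le> (4 * sqrt vr + 1) * c0"
    using cT by (intro mult_right_mono) (auto simp: c0_def)
  also have "\<dots> = 3/4"
  proof -
    have "4 * sqrt vr + 1 \<noteq> 0" using vr by (smt (verit) real_sqrt_ge_zero)
    then show ?thesis unfolding c0_def by (simp add: field_simps)
  qed
  finally show False using inT by linarith
qed



lemma pmf_binomial_ratio:
  assumes "0 \<le> p" "p \<le> 1" "i < n"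
  shows "pmf (binomial_pmf n p) (Suc i) * (real (Suc i) * (1-p)) = pmf (binomial_pmf n p) i * (real (n - i) * p)"
proof -
  have ch: "real (n choose Suc i) * real (Suc i) = real (n choose i) * real (n - i)"
  proof -
    have "Suc i * (n choose Suc i) = n * ((n - 1) choose i)" by (rule binomial_absorption)
    also have "\<dots> = (n - i) * (n choose i)" by (rule binomial_absorb_comp[symmetric])
    finally have "(n choose Suc i) * Suc i = (n choose i) * (n - i)" by (simp add: mult.commute)
    then show ?thesis by (metis of_nat_mult)
  qed
  have nd: "n - i = Suc (n - Suc i)" using assms(3) by simp
  have "pmf (binomial_pmf n p) (Suc i) * (real (Suc i) * (1-p))
      = (real (n choose Suc i) * real (Suc i)) * (p^i * p) * ((1-p)^(n - Suc i) * (1-p))"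
    using assms by (simp only: pmf_binomial power_Suc2 mult_ac)
  also have "\<dots> = (real (n choose i) * real (n - i)) * (p^i * p) * (1-p)^(n - i)"
    by (simp only: ch nd power_Suc2)
  also have "\<dots> = pmf (binomial_pmf n p) i * (real (n - i) * p)"
    using assms by (simp only: pmf_binomial mult_ac)
  finally show ?thesis .
qed

lemma exp_le_one_minus:
  fixes a :: real
  assumes "\<bar>a\<bar> \<le> 1/2"
  shows "exp (- a - 2 * a^2) \<le> 1 - a"
proof -
  have pos: "0 < 1 - a" using assms by (simp add: abs_le_iff)
  have L: "- a - 2 * a^2 \<le> ln (1 - a)"
  proof (cases "a \<ge> 0")
    case True
    show ?thesis by (rule ln_one_minus_pos_lower_bound) (use assms True in \<open>simp_all add: abs_le_iff\<close>)
  next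
    case False
    have "(-a) - (-a)\<^sup>2 \<le> ln (1 + (-a))"
      by (rule ln_one_plus_pos_lower_bound) (use assms False in \<open>simp_all add: abs_le_iff\<close>)
    then have "- a - a^2 \<le> ln (1 - a)" by simp
    then show ?thesis using zero_le_power2[of a] by linarith
  qed
  have "exp (- a - 2 * a^2) \<le> exp (ln (1 - a))" using L by simp
  also have "\<dots> = 1 - a" using pos by simp
  finally show ?thesis .
qed

lemma step_bounds:
  fixes n i :: nat and p vr R :: real
  assumes p: "0 < p" "p < 1" and vr: "vr = real n * p * (1-p)"
    and R: "0 \<le> R" "2 * (R + 1) \<le> vr" and y: "\<bar>real i - real n * p\<bar> \<le> R"
  shows "pmf (binomial_pmf n p) (Suc i) \<ge> pmf (binomial_pmf n p) i *
            exp (- (real i - real n * p + 1) / vr - 2 * R^2 / vr^2)"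
    and "pmf (binomial_pmf n p) i \<ge> pmf (binomial_pmf n p) (Suc i) *
            exp ((real i - real n * p) / vr - 2 * (R+1)^2 / vr^2)"
proof -
  define q where "q = 1 - p"
  define y where "y = real i - real n * p"
  have vpos: "vr > 0" using R by (simp add: algebra_simps)
  have "p * (real n * (1-p)) \<le> real n * (1-p)" by (rule mult_left_le_one_le) (use p in auto)
  then have "real n * p * (1-p) \<le> real n * (1-p)" by (simp add: mult_ac)
  then have "real n * (1-p) \<ge> 2 * (R + 1)" using R vr by linarith
  then have "real i < real n" using y R unfolding abs_le_iff by (simp add: algebra_simps)
  then have ilt: "i < n" by simp
  have e1: "real (n - i) * p = vr - y * p" using ilt vr unfolding y_def by (simp add: of_nat_diff algebra_simps)
  have e2: "real (Suc i) * (1-p) = vr + (y+1) * q" using vr unfolding y_def q_def by (simp add: algebra_simps)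
  define a where "a = y * p / vr"
  define b where "b = (y+1) * q / vr"
  have ya: "\<bar>y\<bar> \<le> R" using y unfolding y_def .
  have yp: "\<bar>y\<bar> * p \<le> R * 1" by (rule mult_mono) (use ya p in auto)
  have aR: "\<bar>a\<bar> \<le> R / vr" unfolding a_def using yp p vpos
    by (simp add: abs_mult abs_divide divide_right_mono)
  have "\<bar>a\<bar> \<le> R / vr" by (rule aR)
  also have "\<dots> \<le> 1/2" using R vpos by (simp add: field_simps)
  finally have ah: "\<bar>a\<bar> \<le> 1/2" .
  have "\<bar>y + 1\<bar> \<le> R + 1" using ya by linarith
  then have yq: "\<bar>y + 1\<bar> * (1 - p) \<le> (R + 1) * 1" by (intro mult_mono) (use p in auto)
  have bR: "\<bar>b\<bar> \<le> (R+1) / vr" unfolding b_def q_def using yq p vpos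
    by (simp add: abs_mult abs_divide divide_right_mono)
  have "\<bar>b\<bar> \<le> (R+1) / vr" by (rule bR)
  also have "\<dots> \<le> 1/2" using R vpos by (simp add: field_simps)
  finally have bh: "\<bar>b\<bar> \<le> 1/2" .
  have a2: "a^2 \<le> R^2 / vr^2"
  proof -
    from aR have "\<bar>a\<bar>^2 \<le> (R/vr)^2" by (intro power_mono) auto
    then show ?thesis by (simp add: power_divide)
  qed
  have b2: "b^2 \<le> (R+1)^2 / vr^2"
  proof -
    from bR have "\<bar>b\<bar>^2 \<le> ((R+1)/vr)^2" by (intro power_mono) auto
    then show ?thesis by (simp add: power_divide)
  qed
  have ab: "a + b = (y + q) / vr" unfolding a_def b_def q_def using vpos by (simp add: field_simps add_divide_distrib[symmetric])
  have num: "vr - y * p = vr * (1 - a)" unfolding a_def using vpos by (simp add: field_simps)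
  have den: "vr + (y+1) * q = vr * (1 + b)" unfolding b_def using vpos by (simp add: field_simps)
  have bpos: "1 + b > 0" using bh by linarith
  have ratio: "pmf (binomial_pmf n p) (Suc i) = pmf (binomial_pmf n p) i * ((1 - a) / (1 + b))"
  proof -
    have "pmf (binomial_pmf n p) (Suc i) * (vr * (1 + b)) = pmf (binomial_pmf n p) i * (vr * (1 - a))"
      using pmf_binomial_ratio[of p i n] p ilt unfolding e1 e2 num den by simp
    then have "vr * (pmf (binomial_pmf n p) (Suc i) * (1 + b)) = vr * (pmf (binomial_pmf n p) i * (1 - a))"
      by (simp only: mult_ac)
    then have "pmf (binomial_pmf n p) (Suc i) * (1 + b) = pmf (binomial_pmf n p) i * (1 - a)"
      using vpos by simp
    then show ?thesis using bpos by (simp add: eq_divide_eq)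
  qed
  have pm0: "pmf (binomial_pmf n p) i \<ge> 0" by simp
  have q01: "0 \<le> q" "q \<le> 1" using p unfolding q_def by auto
  show "pmf (binomial_pmf n p) (Suc i) \<ge> pmf (binomial_pmf n p) i *
            exp (- (real i - real n * p + 1) / vr - 2 * R^2 / vr^2)"
  proof -
    have "exp (- (y + 1) / vr - 2 * R^2 / vr^2) \<le> exp (- a - b - 2 * a^2)"
    proof -
      have "- (y + 1) / vr \<le> - (y + q) / vr" using q01 vpos by (simp add: divide_right_mono)
      moreover have "- (y + q) / vr = - (a + b)" unfolding ab by (simp add: minus_divide_left)
      ultimately show ?thesis using a2 by simp
    qed
    also have "\<dots> = exp (- a - 2 * a^2) / exp b" by (simp add: exp_diff[symmetric])
    also have "\<dots> \<le> (1 - a) / (1 + b)"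
      using exp_le_one_minus[OF ah] exp_ge_add_one_self[of b] bpos ah
      by (intro frac_le) (auto simp: abs_le_iff)
    finally have "exp (- (y + 1) / vr - 2 * R^2 / vr^2) \<le> (1 - a) / (1 + b)" .
    then show ?thesis unfolding ratio y_def using pm0 by (intro mult_left_mono) auto
  qed
  show "pmf (binomial_pmf n p) i \<ge> pmf (binomial_pmf n p) (Suc i) *
            exp ((real i - real n * p) / vr - 2 * (R+1)^2 / vr^2)"
  proof -
    have bb: "\<bar>-b\<bar> \<le> 1/2" using bh by simp
    have "(1 - a) / (1 + b) \<le> exp (- a) / exp (b - 2 * b^2)"
      using exp_le_one_minus[OF bb] exp_ge_add_one_self[of "-a"] bpos
      by (intro frac_le) (auto simp: power2_eq_square)
    also have "\<dots> = exp (- a - b + 2 * b^2)" by (simp add: exp_diff[symmetric] algebra_simps)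
    also have "\<dots> \<le> exp (- y / vr + 2 * (R+1)^2 / vr^2)"
    proof -
      have "- (y + q) / vr \<le> - y / vr" by (intro divide_right_mono) (use q01 vpos in auto)
      moreover have "- (y + q) / vr = - (a + b)" unfolding ab by (simp add: minus_divide_left)
      ultimately show ?thesis using b2 by simp
    qed
    finally have rle: "(1 - a) / (1 + b) \<le> exp (- y / vr + 2 * (R+1)^2 / vr^2)" .
    have "pmf (binomial_pmf n p) (Suc i) * exp (y / vr - 2 * (R+1)^2 / vr^2)
        \<le> pmf (binomial_pmf n p) i * exp (- y / vr + 2 * (R+1)^2 / vr^2) * exp (y / vr - 2 * (R+1)^2 / vr^2)"
      unfolding ratio using rle pm0 by (intro mult_right_mono mult_left_mono) auto
    also have "\<dots> = pmf (binomial_pmf n p) i" by (simp add: mult.assoc exp_add[symmetric])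
    finally show ?thesis unfolding y_def .
  qed
qed


lemma walk_up:
  fixes n m d :: nat and p vr R :: real
  assumes p: "0 < p" "p < 1" and vr: "vr = real n * p * (1-p)"
    and R: "0 \<le> R" "2 * (R + 1) \<le> vr"
    and rng: "\<And>i. m \<le> i \<Longrightarrow> i < m + d \<Longrightarrow> \<bar>real i - real n * p\<bar> \<le> R"
  shows "pmf (binomial_pmf n p) (m + d) \<ge> pmf (binomial_pmf n p) m *
           exp (- ((real (m + d) - real n * p)^2 - (real m - real n * p)^2) / (2 * vr)
                - real d * (1 / (2 * vr) + 2 * (R+1)^2 / vr^2))"
  using rng
proof (induction d)
  case 0 show ?case by simp
next
  case (Suc d)
  define E0 where "E0 = 1 / (2 * vr) + 2 * (R+1)^2 / vr^2"
  define c where "c = real n * p"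
  define Y where "Y = real (m + d) - c"
  define Y0 where "Y0 = real m - c"
  have Y1: "Y + 1 = real (m + Suc d) - c" unfolding Y_def by simp
  have vpos: "vr > 0" using R by (simp add: algebra_simps)
  have IH: "pmf (binomial_pmf n p) (m + d) \<ge> pmf (binomial_pmf n p) m *
           exp (- (Y^2 - Y0^2) / (2 * vr) - real d * E0)"
    using Suc.IH Suc.prems unfolding E0_def Y_def Y0_def c_def by auto
  have st: "pmf (binomial_pmf n p) (Suc (m + d)) \<ge> pmf (binomial_pmf n p) (m + d) *
            exp (- (Y + 1) / vr - 2 * R^2 / vr^2)"
    using step_bounds(1)[OF p vr R Suc.prems[of "m+d"]] unfolding Y_def c_def by simp
  have ex: "- (Y^2 - Y0^2) / (2 * vr) - real d * E0 + (- (Y + 1) / vr - 2 * R^2 / vr^2)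
      \<ge> - ((Y+1)^2 - Y0^2) / (2 * vr) - real (Suc d) * E0"
  proof -
    have e: "- ((Y+1)^2 - Y0^2) / (2 * vr) = - (Y^2 - Y0^2) / (2 * vr) - (Y+1) / vr + 1 / (2 * vr)"
      using vpos by (simp add: field_simps power2_eq_square)
    have "R^2 \<le> (R+1)^2" using R by (simp add: power2_eq_square algebra_simps)
    then have "2 * R^2 / vr^2 \<le> 2 * (R+1)^2 / vr^2" using vpos by (simp add: divide_right_mono)
    moreover have "- (Y + 1) / vr = - ((Y + 1) / vr)" by (rule minus_divide_left[symmetric])
    moreover have "real (Suc d) * E0 = real d * E0 + E0" by (simp add: algebra_simps)
    ultimately show ?thesis unfolding e using E0_def by linarith
  qed
  have "pmf (binomial_pmf n p) m * exp (- ((Y+1)^2 - Y0^2) / (2 * vr) - real (Suc d) * E0)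
      \<le> pmf (binomial_pmf n p) m * exp (- (Y^2 - Y0^2) / (2 * vr) - real d * E0 + (- (Y + 1) / vr - 2 * R^2 / vr^2))"
    using ex by (intro mult_left_mono) auto
  also have "\<dots> = (pmf (binomial_pmf n p) m * exp (- (Y^2 - Y0^2) / (2 * vr) - real d * E0)) * exp (- (Y + 1) / vr - 2 * R^2 / vr^2)"
    by (simp add: exp_add mult_ac)
  also have "\<dots> \<le> pmf (binomial_pmf n p) (m + d) * exp (- (Y + 1) / vr - 2 * R^2 / vr^2)"
    using IH by (intro mult_right_mono) auto
  also have "\<dots> \<le> pmf (binomial_pmf n p) (Suc (m + d))" by (rule st)
  finally have F: "pmf (binomial_pmf n p) m * exp (- ((Y+1)^2 - Y0^2) / (2 * vr) - real (Suc d) * E0)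
      \<le> pmf (binomial_pmf n p) (m + Suc d)" by simp
  show ?case using F unfolding Y1 unfolding E0_def Y0_def c_def .
qed

lemma walk_down:
  fixes n k d :: nat and p vr R :: real
  assumes p: "0 < p" "p < 1" and vr: "vr = real n * p * (1-p)"
    and R: "0 \<le> R" "2 * (R + 1) \<le> vr"
    and rng: "\<And>i. k \<le> i \<Longrightarrow> i < k + d \<Longrightarrow> \<bar>real i - real n * p\<bar> \<le> R"
  shows "pmf (binomial_pmf n p) k \<ge> pmf (binomial_pmf n p) (k + d) *
           exp (- ((real k - real n * p)^2 - (real (k + d) - real n * p)^2) / (2 * vr)
                - real d * (1 / (2 * vr) + 2 * (R+1)^2 / vr^2))"
  using rng
proof (induction d)
  case 0 show ?case by simp
next
  case (Suc d)
  define E0 where "E0 = 1 / (2 * vr) + 2 * (R+1)^2 / vr^2"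
  define c where "c = real n * p"
  define Y where "Y = real (k + d) - c"
  define Y0 where "Y0 = real k - c"
  have Y1: "Y + 1 = real (k + Suc d) - c" unfolding Y_def by simp
  have vpos: "vr > 0" using R by (simp add: algebra_simps)
  have IH: "pmf (binomial_pmf n p) k \<ge> pmf (binomial_pmf n p) (k + d) *
           exp (- (Y0^2 - Y^2) / (2 * vr) - real d * E0)"
    using Suc.IH Suc.prems unfolding E0_def Y_def Y0_def c_def by auto
  have st: "pmf (binomial_pmf n p) (k + d) \<ge> pmf (binomial_pmf n p) (Suc (k + d)) *
            exp (Y / vr - 2 * (R+1)^2 / vr^2)"
    using step_bounds(2)[OF p vr R Suc.prems[of "k+d"]] unfolding Y_def c_def by simp
  have ex: "- (Y0^2 - Y^2) / (2 * vr) - real d * E0 + (Y / vr - 2 * (R+1)^2 / vr^2)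
      \<ge> - (Y0^2 - (Y+1)^2) / (2 * vr) - real (Suc d) * E0"
  proof -
    have e: "- (Y0^2 - (Y+1)^2) / (2 * vr) = - (Y0^2 - Y^2) / (2 * vr) + Y / vr + 1 / (2 * vr)"
      using vpos by (simp add: field_simps power2_eq_square)
    have "real (Suc d) * E0 = real d * E0 + E0" by (simp add: algebra_simps)
    then show ?thesis unfolding e using E0_def by linarith
  qed
  have "pmf (binomial_pmf n p) (Suc (k + d)) * exp (- (Y0^2 - (Y+1)^2) / (2 * vr) - real (Suc d) * E0)
      \<le> pmf (binomial_pmf n p) (Suc (k + d)) * exp (- (Y0^2 - Y^2) / (2 * vr) - real d * E0 + (Y / vr - 2 * (R+1)^2 / vr^2))"
    using ex by (intro mult_left_mono) auto
  also have "\<dots> = (pmf (binomial_pmf n p) (Suc (k + d)) * exp (Y / vr - 2 * (R+1)^2 / vr^2)) * exp (- (Y0^2 - Y^2) / (2 * vr) - real d * E0)"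
    by (simp add: exp_add mult_ac)
  also have "\<dots> \<le> pmf (binomial_pmf n p) (k + d) * exp (- (Y0^2 - Y^2) / (2 * vr) - real d * E0)"
    using st by (intro mult_right_mono) auto
  also have "\<dots> \<le> pmf (binomial_pmf n p) k" by (rule IH)
  finally have F: "pmf (binomial_pmf n p) (k + Suc d) * exp (- (Y0^2 - (Y+1)^2) / (2 * vr) - real (Suc d) * E0)
      \<le> pmf (binomial_pmf n p) k" by simp
  show ?case using F unfolding Y1 unfolding E0_def Y0_def c_def .
qed

lemma local_walk:
  fixes n m k :: nat and p vr R :: real
  assumes p: "0 < p" "p < 1" and vr: "vr = real n * p * (1-p)"
    and R: "0 \<le> R" "2 * (R + 1) \<le> vr"
    and m: "\<bar>real m - real n * p\<bar> \<le> R" and k: "\<bar>real k - real n * p\<bar> \<le> R"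
  shows "pmf (binomial_pmf n p) k \<ge> pmf (binomial_pmf n p) m *
           exp (- ((real k - real n * p)^2 - (real m - real n * p)^2) / (2 * vr)
                - \<bar>real k - real m\<bar> * (1 / (2 * vr) + 2 * (R+1)^2 / vr^2))"
proof (cases "m \<le> k")
  case True
  have rng: "\<bar>real i - real n * p\<bar> \<le> R" if "m \<le> i" "i < m + (k - m)" for i
  proof -
    have "real m \<le> real i" "real i \<le> real k" using that True by auto
    then show ?thesis using m k unfolding abs_le_iff by linarith
  qed
  have kk: "m + (k - m) = k" using True by simp
  have kr: "real (k - m) = \<bar>real k - real m\<bar>" using True by (simp add: of_nat_diff)
  from walk_up[where d="k - m" and m=m, OF p vr R rng] show ?thesis unfolding kk kr .
next
  case False
  have rng: "\<bar>real i - real n * p\<bar> \<le> R" if "k \<le> i" "i < k + (m - k)" for i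
  proof -
    have "real k \<le> real i" "real i \<le> real m" using that False by auto
    then show ?thesis using m k unfolding abs_le_iff by linarith
  qed
  have kk: "k + (m - k) = m" using False by simp
  have kr: "real (m - k) = \<bar>real k - real m\<bar>" using False by (simp add: of_nat_diff)
  from walk_down[where d="m - k" and k=k, OF p vr R rng] show ?thesis unfolding kk kr .
qed


lemma local_lower:
  fixes n k :: nat and p vr R :: real
  assumes p: "0 < p" "p < 1" and vr: "vr = real n * p * (1-p)"
    and R: "2 * sqrt vr \<le> R" "2 * (R + 1) \<le> vr"
    and k: "\<bar>real k - real n * p\<bar> \<le> R"
  shows "pmf (binomial_pmf n p) k \<ge> (3/4) / (4 * sqrt vr + 1) *
           exp (- ((real k - real n * p)^2) / (2 * vr) - 2 * R * (1 / (2 * vr) + 2 * (R+1)^2 / vr^2))"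
proof -
  have vr0: "0 \<le> vr" unfolding vr using p by simp
  have "0 \<le> sqrt vr" using vr0 by simp
  then have R0: "0 \<le> R" using R(1) by linarith
  have vpos: "vr > 0" using R(2) R0 by (simp add: algebra_simps)
  obtain m where m: "m \<le> n" "\<bar>real m - real n * p\<bar> \<le> 2 * sqrt vr"
      "pmf (binomial_pmf n p) m \<ge> (3/4) / (4 * sqrt vr + 1)"
    using mode_exists[OF p vr vpos] by blast
  have mR: "\<bar>real m - real n * p\<bar> \<le> R" using m(2) R(1) by linarith
  define E0 where "E0 = 1 / (2 * vr) + 2 * (R+1)^2 / vr^2"
  have E0: "E0 \<ge> 0" unfolding E0_def using vpos by simp
  have W: "pmf (binomial_pmf n p) k \<ge> pmf (binomial_pmf n p) m *
           exp (- ((real k - real n * p)^2 - (real m - real n * p)^2) / (2 * vr)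
                - \<bar>real k - real m\<bar> * E0)"
    using local_walk[OF p vr R0 R(2) mR k] unfolding E0_def .
  have km: "\<bar>real k - real m\<bar> \<le> 2 * R" using mR k by linarith
  have "- ((real k - real n * p)^2) / (2 * vr) - 2 * R * E0
      \<le> - ((real k - real n * p)^2 - (real m - real n * p)^2) / (2 * vr) - \<bar>real k - real m\<bar> * E0"
  proof -
    have "- ((real k - real n * p)^2) / (2 * vr) \<le> - ((real k - real n * p)^2 - (real m - real n * p)^2) / (2 * vr)"
      using vpos by (intro divide_right_mono) auto
    moreover have "\<bar>real k - real m\<bar> * E0 \<le> 2 * R * E0" using km E0 by (rule mult_right_mono)
    ultimately show ?thesis by linarith
  qed
  then have ee: "exp (- ((real k - real n * p)^2) / (2 * vr) - 2 * R * E0)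
      \<le> exp (- ((real k - real n * p)^2 - (real m - real n * p)^2) / (2 * vr) - \<bar>real k - real m\<bar> * E0)"
    by (subst exp_le_cancel_iff)
  have "(3/4) / (4 * sqrt vr + 1) * exp (- ((real k - real n * p)^2) / (2 * vr) - 2 * R * E0)
      \<le> pmf (binomial_pmf n p) m *
           exp (- ((real k - real n * p)^2 - (real m - real n * p)^2) / (2 * vr) - \<bar>real k - real m\<bar> * E0)"
    by (rule mult_mono[OF m(3) ee]) simp_all
  then show ?thesis using W unfolding E0_def by (rule order_trans)
qed



lemma E_bound:
  fixes V vi h :: real
  assumes V: "V > 0" and vi: "(99/200) * V \<le> vi" and h: "100 \<le> h" "h \<le> V / 1000"
    and h3: "h^3 \<le> V^2 / 100000"
  shows "2 * (2 * h) * (1 / (2 * vi) + 2 * (2 * h + 1)^2 / vi^2) \<le> 7 / 1000"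
proof -
  have vpos: "vi > 0" using V vi by (smt (verit) mult_pos_pos zero_less_divide_iff)
  have t1: "2 * (2 * h) * (1 / (2 * vi)) \<le> 41 / 10000"
  proof -
    have "20000 * h \<le> 41 * vi" using vi h by linarith
    then show ?thesis using vpos by (simp add: field_simps)
  qed
  have t2: "2 * (2 * h) * (2 * (2 * h + 1)^2 / vi^2) \<le> 29 / 10000"
  proof -
    have "2 * h + 1 \<le> (201/100) * h" using h by linarith
    then have "(2 * h + 1)^2 \<le> ((201/100) * h)^2" using h by (intro power_mono) auto
    then have "h * (2 * h + 1)^2 \<le> h * ((201/100) * h)^2" using h by (intro mult_left_mono) auto
    also have "\<dots> = (40401/10000) * h^3" by (simp add: power2_eq_square power3_eq_cube)
    also have "\<dots> \<le> (40401/10000) * (V^2 / 100000)" using h3 by simp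
    finally have a: "h * (2 * h + 1)^2 \<le> (40401/10000) * (V^2 / 100000)" .
    have "((99/200) * V)^2 \<le> vi^2" using vi V by (intro power_mono) auto
    moreover have "((99/200) * V)^2 = (9801/40000) * V^2" by (simp add: power2_eq_square)
    ultimately have b: "(9801/40000) * V^2 \<le> vi^2" by simp
    have a': "h * (2 * h + 1)^2 \<le> (40401/1000000000) * V^2" using a by simp
    have "80000 * (h * (2 * h + 1)^2) \<le> 29 * vi^2" using a' b zero_le_power2[of V] by linarith
    then show ?thesis using vpos by (simp add: field_simps)
  qed
  have "2 * (2 * h) * (1 / (2 * vi) + 2 * (2 * h + 1)^2 / vi^2)
      = 2 * (2 * h) * (1 / (2 * vi)) + 2 * (2 * h) * (2 * (2 * h + 1)^2 / vi^2)"
    by (simp add: distrib_left)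
  then show ?thesis using t1 t2 by linarith
qed

lemma quad_id:
  fixes V v1 v2 h s u :: real
  assumes "V = v1 + v2" "v1 > 0" "v2 > 0"
  shows "(h * v1 / V + s)^2 / (2 * v1) + (h * v2 / V + u)^2 / (2 * v2)
       = h^2 / (2 * V) + (h / V) * (s + u) + s^2 / (2 * v1) + u^2 / (2 * v2)"
proof -
  have Vn: "V \<noteq> 0" using assms by simp
  have n1: "v1 \<noteq> 0" "v2 \<noteq> 0" using assms by auto
  have i1: "(h * v1 / V + s)^2 / (2 * v1) = h^2 * v1 / (2 * V^2) + (h / V) * s + s^2 / (2 * v1)"
    using n1 Vn by (simp add: field_simps power2_eq_square)
  have i2: "(h * v2 / V + u)^2 / (2 * v2) = h^2 * v2 / (2 * V^2) + (h / V) * u + u^2 / (2 * v2)"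
    using n1 Vn by (simp add: field_simps power2_eq_square)
  have "h^2 * v1 / (2 * V^2) + h^2 * v2 / (2 * V^2) = h^2 * (v1 + v2) / (2 * V^2)"
    by (simp add: add_divide_distrib distrib_left)
  also have "\<dots> = h^2 * V / (2 * V^2)" using assms(1) by simp
  also have "\<dots> = h^2 / (2 * V)" using Vn by (simp add: power2_eq_square)
  finally have i3: "h^2 * v1 / (2 * V^2) + h^2 * v2 / (2 * V^2) = h^2 / (2 * V)" .
  show ?thesis unfolding i1 i2 using i3 by (simp add: algebra_simps add_divide_distrib)
qed

lemma finite_nat_ivl: "finite {k::nat. lo \<le> real k \<and> real k \<le> hi}"
proof (rule finite_subset)
  show "{k::nat. lo \<le> real k \<and> real k \<le> hi} \<subseteq> {..nat \<lceil>hi\<rceil>}"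
  proof
    fix k assume "k \<in> {k::nat. lo \<le> real k \<and> real k \<le> hi}"
    then have "real k \<le> hi" by simp
    then have "real k \<le> real (nat \<lceil>hi\<rceil>)" using real_nat_ceiling_ge[of hi] by linarith
    then show "k \<in> {..nat \<lceil>hi\<rceil>}" by simp
  qed
qed simp

lemma core:
  fixes n1 n2 :: nat and p h V :: real
  assumes p: "0 < p" "p < 1"
    and V: "V = (real n1 + real n2) * p * (1-p)"
    and hV: "2 * sqrt V < h"
    and Vbig: "100000 \<le> V"
    and h3: "h^3 \<le> V^2 / 100000"
    and S: "\<bar>real n2 - real n1\<bar> \<le> (real n1 + real n2) / 100"
  shows "binom_sum_tail n1 n2 p (real n1 * p + real n2 * (1-p) + h)
           \<ge> sqrt V / (2 * pi * h) * exp (- (h^2) / (2 * V) - 4)"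
proof -
  define q where "q = 1 - p"
  have q: "0 < q" "q < 1" "p = 1 - q" using p unfolding q_def by auto
  define v1 where "v1 = real n1 * p * (1-p)"
  define v2 where "v2 = real n2 * q * (1-q)"
  define mu1 where "mu1 = real n1 * p"
  define mu2 where "mu2 = real n2 * q"
  define a where "a = mu1 + mu2 + h"
  have pq: "0 < p * q" using p q by simp
  have V12: "V = v1 + v2" unfolding V v1_def v2_def q_def by (simp add: algebra_simps)
  have Vpos: "V > 0" using Vbig by simp
  have n1b: "real n1 \<ge> (99/200) * (real n1 + real n2)" "real n1 \<le> (101/200) * (real n1 + real n2)"
    using S unfolding abs_le_iff by (simp_all add: field_simps)
  have n2b: "real n2 \<ge> (99/200) * (real n1 + real n2)" "real n2 \<le> (101/200) * (real n1 + real n2)"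
    using S unfolding abs_le_iff by (simp_all add: field_simps)
  have v1e: "v1 = real n1 * (p * q)" unfolding v1_def q_def by (simp add: algebra_simps)
  have v2e: "v2 = real n2 * (p * q)" unfolding v2_def q_def by (simp add: algebra_simps)
  have Ve: "V = (real n1 + real n2) * (p * q)" unfolding V q_def by (simp add: algebra_simps)
  have v1b: "(99/200) * V \<le> v1" "v1 \<le> (101/200) * V"
    unfolding v1e Ve using mult_right_mono[OF n1b(1), of "p*q"] mult_right_mono[OF n1b(2), of "p*q"] pq
    by (simp_all add: algebra_simps)
  have v2b: "(99/200) * V \<le> v2" "v2 \<le> (101/200) * V"
    unfolding v2e Ve using mult_right_mono[OF n2b(1), of "p*q"] mult_right_mono[OF n2b(2), of "p*q"] pq
    by (simp_all add: algebra_simps)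
  have v1pos: "v1 > 0" and v2pos: "v2 > 0" using v1b v2b Vpos by linarith+
  have sV: "316 \<le> sqrt V" using Vbig by (intro real_le_rsqrt) simp
  have h0: "632 < h" using hV sV by linarith
  have h2V: "4 * V < h^2"
  proof -
    have "(2 * sqrt V)^2 < h^2" using hV sV Vpos by (intro power_strict_mono) auto
    then show ?thesis using Vpos by (simp add: power_mult_distrib)
  qed
  have hle: "h \<le> V / 1000"
  proof (rule ccontr)
    assume "\<not> h \<le> V / 1000"
    then have "V / 1000 < h" by simp
    then have "(V/1000)^3 < h^3" using Vpos by (intro power_strict_mono) auto
    moreover have "V^2 / 100000 < (V/1000)^3"
    proof -
      have "V^2 * 20000 \<le> V^2 * V" using Vbig by (intro mult_left_mono) auto
      then show ?thesis using Vpos by (simp add: power3_eq_cube power2_eq_square field_simps)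
    qed
    ultimately show False using h3 by linarith
  qed
  define w where "w = V / h"
  have wpos: "w > 0" unfolding w_def using Vpos h0 by simp
  have wb: "1000 \<le> w" unfolding w_def using hle h0 by (simp add: field_simps)
  have wh: "w * h = V" unfolding w_def using h0 by simp
  have w2: "w^2 \<le> V / 4"
  proof -
    have "w^2 * h^2 = V^2" using wh by (metis power_mult_distrib)
    moreover have "w^2 * (4 * V) \<le> w^2 * h^2" using h2V by (intro mult_left_mono) auto
    ultimately have "w^2 * (4 * V) \<le> V * V" by (simp add: power2_eq_square)
    then show ?thesis using Vpos by (simp add: field_simps)
  qed
  define A where "A = sqrt v1"
  define B where "B = sqrt v2"
  have AA: "A^2 = v1" unfolding A_def using v1pos by simp
  have BB: "B^2 = v2" unfolding B_def using v2pos by simp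
  have Ab: "222 \<le> A" unfolding A_def using v1b Vbig by (intro real_le_rsqrt) simp
  have Bb: "222 \<le> B" unfolding B_def using v2b Vbig by (intro real_le_rsqrt) simp
  have AV: "A \<le> sqrt V" unfolding A_def using v1b V12 v2pos by (intro real_sqrt_le_mono) linarith
  have Ah: "A < h / 2" using AV hV by linarith
  have h100: "100 \<le> h" using h0 by simp
  define E1 where "E1 = 2 * (2 * h) * (1 / (2 * v1) + 2 * (2 * h + 1)^2 / v1^2)"
  define E2 where "E2 = 2 * (2 * h) * (1 / (2 * v2) + 2 * (2 * h + 1)^2 / v2^2)"
  have E1b: "E1 \<le> 7/1000" unfolding E1_def by (rule E_bound[OF Vpos v1b(1) h100 hle h3])
  have E2b: "E2 \<le> 7/1000" unfolding E2_def by (rule E_bound[OF Vpos v2b(1) h100 hle h3])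
  define c1 where "c1 = (3/4) / (4 * A + 1)"
  define c2 where "c2 = (3/4) / (4 * B + 1)"
  have c1pos: "c1 > 0" unfolding c1_def using Ab by simp
  have c2pos: "c2 > 0" unfolding c2_def using Bb by simp
  have "4 * h + 2 \<le> v1" using hle v1b Vbig by linarith
  then have Rv1: "2 * (2 * h + 1) \<le> v1" by simp
  have "4 * h + 2 \<le> v2" using hle v2b Vbig by linarith
  then have Rv2: "2 * (2 * h + 1) \<le> v2" by simp
  have loc1: "pmf (binomial_pmf n1 p) j \<ge> c1 * exp (- ((real j - mu1)^2) / (2 * v1) - E1)"
    if "\<bar>real j - mu1\<bar> \<le> 2 * h" for j
  proof -
    have "2 * sqrt v1 \<le> 2 * h" using Ah h0 unfolding A_def by linarith
    from local_lower[OF p v1_def this Rv1] that show ?thesis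
      unfolding c1_def E1_def A_def mu1_def by simp
  qed
  have loc2: "pmf (binomial_pmf n2 q) k \<ge> c2 * exp (- ((real k - mu2)^2) / (2 * v2) - E2)"
    if "\<bar>real k - mu2\<bar> \<le> 2 * h" for k
  proof -
    have "B \<le> sqrt V" unfolding B_def using V12 v1pos by (intro real_sqrt_le_mono) linarith
    then have "B < h / 2" using hV by linarith
    then have "2 * sqrt v2 \<le> 2 * h" using h0 unfolding B_def by linarith
    from local_lower[OF q(1,2) v2_def this Rv2] that show ?thesis
      unfolding c2_def E2_def B_def mu2_def by simp
  qed
  define h1 where "h1 = h * v1 / V"
  define h2 where "h2 = h * v2 / V"
  have "h * v1 / V + h * v2 / V = h * (v1 + v2) / V" by (simp add: add_divide_distrib distrib_left)
  also have "\<dots> = h" using V12 Vpos by simp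
  finally have h12: "h1 + h2 = h" unfolding h1_def h2_def .
  have h1b: "0 \<le> h1" "h1 \<le> h" unfolding h1_def using Vpos v1pos v2pos V12 h0
    by (simp_all add: field_simps)
  have h2b: "0 \<le> h2" "h2 \<le> h" unfolding h2_def using Vpos v1pos v2pos V12 h0
    by (simp_all add: field_simps)
  have wleh: "w \<le> h"
  proof -
    have "V \<le> h * h" using h2V Vpos by (simp add: power2_eq_square)
    then show ?thesis unfolding w_def using h0 by (simp add: field_simps)
  qed
  define L where "L = c1 * c2 * exp (- (h^2) / (2 * V) - 23/10)"
  define J where "J = {j::nat. mu1 + h1 \<le> real j \<and> real j \<le> mu1 + h1 + A}"
  define K where "K = (\<lambda>j::nat. {k::nat. a - real j \<le> real k \<and> real k \<le> a - real j + w})"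
  have tm: "pmf (binomial_pmf n1 p) j * pmf (binomial_pmf n2 q) k \<ge> L"
    if jJ: "j \<in> J" and kK: "k \<in> K j" for j k
  proof -
    define s where "s = real j - mu1 - h1"
    define u where "u = real k - mu2 - h2"
    have s0: "0 \<le> s" and sA: "s \<le> A" using jJ unfolding J_def s_def by auto
    have u1: "- s \<le> u" and u2: "u \<le> w - s"
      using kK h12 unfolding K_def s_def u_def a_def by auto
    have x1: "real j - mu1 = h * v1 / V + s" unfolding s_def h1_def by simp
    have x2: "real k - mu2 = h * v2 / V + u" unfolding u_def h2_def by simp
    have ax1: "\<bar>real j - mu1\<bar> \<le> 2 * h" using s0 sA h1b Ah unfolding s_def by (simp add: abs_le_iff)
    have ax2: "\<bar>real k - mu2\<bar> \<le> 2 * h" using u1 u2 s0 sA h2b Ah wleh wpos unfolding u_def by (simp add: abs_le_iff)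
    have p1: "pmf (binomial_pmf n1 p) j \<ge> c1 * exp (- ((real j - mu1)^2) / (2 * v1) - E1)"
      by (rule loc1[OF ax1])
    have p2: "pmf (binomial_pmf n2 q) k \<ge> c2 * exp (- ((real k - mu2)^2) / (2 * v2) - E2)"
      by (rule loc2[OF ax2])
    have Q: "(real j - mu1)^2 / (2 * v1) + (real k - mu2)^2 / (2 * v2)
        = h^2 / (2 * V) + (h / V) * (s + u) + s^2 / (2 * v1) + u^2 / (2 * v2)"
      unfolding x1 x2 by (rule quad_id[OF V12 v1pos v2pos])
    have b1: "(h / V) * (s + u) \<le> 1"
    proof -
      have "(h / V) * (s + u) \<le> (h / V) * w" using u2 h0 Vpos by (intro mult_left_mono) auto
      also have "\<dots> = 1" unfolding w_def using h0 Vpos by simp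
      finally show ?thesis .
    qed
    have b2: "s^2 / (2 * v1) \<le> 1/2"
    proof -
      have "s^2 \<le> A^2" using s0 sA by (intro power_mono) auto
      then show ?thesis using AA v1pos by (simp add: field_simps)
    qed
    have b3: "u^2 / (2 * v2) \<le> 78/100"
    proof -
      have "u^2 \<le> A^2 + w^2"
      proof (cases "u \<ge> 0")
        case True
        then have "u^2 \<le> w^2" using u2 s0 by (intro power_mono) auto
        then show ?thesis by (simp add: add_increasing)
      next
        case False
        then have "(-u)^2 \<le> A^2" using u1 sA by (intro power_mono) auto
        then show ?thesis by (simp add: add_increasing2)
      qed
      also have "\<dots> \<le> v1 + V / 4" using AA w2 by simp
      also have "\<dots> \<le> (156/100) * v2" using v1b v2b by linarith
      finally show ?thesis using v2pos by (simp add: field_simps)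
    qed
    have ex: "- (h^2) / (2 * V) - 23/10 \<le> (- ((real j - mu1)^2) / (2 * v1) - E1) + (- ((real k - mu2)^2) / (2 * v2) - E2)"
    proof -
      have "- (h^2) / (2 * V) = - (h^2 / (2 * V))" by (rule minus_divide_left[symmetric])
      moreover have "- ((real j - mu1)^2) / (2 * v1) = - ((real j - mu1)^2 / (2 * v1))" by (rule minus_divide_left[symmetric])
      moreover have "- ((real k - mu2)^2) / (2 * v2) = - ((real k - mu2)^2 / (2 * v2))" by (rule minus_divide_left[symmetric])
      ultimately show ?thesis using Q b1 b2 b3 E1b E2b by linarith
    qed
    have "L = c1 * c2 * exp (- (h^2) / (2 * V) - 23/10)" by (rule L_def)
    also have "\<dots> \<le> c1 * c2 * exp ((- ((real j - mu1)^2) / (2 * v1) - E1) + (- ((real k - mu2)^2) / (2 * v2) - E2))"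
    proof -
      have "exp (- (h^2) / (2 * V) - 23/10) \<le> exp ((- ((real j - mu1)^2) / (2 * v1) - E1) + (- ((real k - mu2)^2) / (2 * v2) - E2))"
        using ex by (subst exp_le_cancel_iff)
      moreover have "0 \<le> c1 * c2" using c1pos c2pos by simp
      ultimately show ?thesis by (rule mult_left_mono)
    qed
    also have "\<dots> = (c1 * exp (- ((real j - mu1)^2) / (2 * v1) - E1)) * (c2 * exp (- ((real k - mu2)^2) / (2 * v2) - E2))"
      by (simp only: exp_add mult_ac)
    also have "\<dots> \<le> pmf (binomial_pmf n1 p) j * pmf (binomial_pmf n2 q) k"
    proof (rule mult_mono[OF p1 p2])
      show "0 \<le> pmf (binomial_pmf n1 p) j" by simp
      show "0 \<le> c2 * exp (- ((real k - mu2)^2) / (2 * v2) - E2)" using c2pos by simp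
    qed
    finally show ?thesis .
  qed
  have Lpos: "L \<ge> 0" unfolding L_def using c1pos c2pos by simp
  have fJ: "finite J" unfolding J_def by (rule finite_nat_ivl)
  have fK: "finite (K j)" for j unfolding K_def by (rule finite_nat_ivl)
  have A0: "0 \<le> A" using Ab by simp
  have cardJ: "A - 1 \<le> real (card J)"
  proof -
    have "mu1 + h1 + A - (mu1 + h1) - 1 \<le> real (card J)" unfolding J_def
      by (rule card_nat_ivl_lower) (use h1b A0 p in \<open>auto simp: mu1_def\<close>)
    then show ?thesis by simp
  qed
  have "q * (1 - q) \<le> q" by (rule mult_right_le_one_le) (use q in auto)
  then have "real n2 * (q * (1 - q)) \<le> real n2 * q" by (intro mult_left_mono) auto
  then have v2mu: "v2 \<le> mu2" unfolding v2_def mu2_def by (simp add: mult.assoc)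
  have cardK: "w - 1 \<le> real (card (K j))" if "j \<in> J" for j
  proof -
    have "real j \<le> mu1 + h1 + A" using that unfolding J_def by simp
    then have lo: "0 \<le> a - real j" unfolding a_def using h12 h2b Ah hle v2b v2mu by linarith
    have "a - real j + w - (a - real j) - 1 \<le> real (card (K j))" unfolding K_def
      by (rule card_nat_ivl_lower) (use lo wpos in auto)
    then show ?thesis by simp
  qed
  have sub: "Sigma J K \<subseteq> {(x1, x2). real x1 + real x2 \<ge> real n1 * p + real n2 * (1-p) + h}"
  proof
    fix x assume "x \<in> Sigma J K"
    then obtain j k where x: "x = (j, k)" "k \<in> K j" by auto
    then have "a - real j \<le> real k" unfolding K_def by simp
    then show "x \<in> {(x1, x2). real x1 + real x2 \<ge> real n1 * p + real n2 * (1-p) + h}"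
      using x unfolding a_def mu1_def mu2_def q_def by simp
  qed
  have fS: "finite (Sigma J K)" using fJ fK by (intro finite_SigmaI) auto
  have "binom_sum_tail n1 n2 p (real n1 * p + real n2 * (1-p) + h)
      = measure (pair_pmf (binomial_pmf n1 p) (binomial_pmf n2 q))
          {(x1, x2). real x1 + real x2 \<ge> real n1 * p + real n2 * (1-p) + h}"
    unfolding binom_sum_tail_def q_def by simp
  also have "\<dots> \<ge> measure (pair_pmf (binomial_pmf n1 p) (binomial_pmf n2 q)) (Sigma J K)"
    by (rule measure_pmf.finite_measure_mono[OF sub]) simp
  finally have P1: "binom_sum_tail n1 n2 p (real n1 * p + real n2 * (1-p) + h)
      \<ge> measure (pair_pmf (binomial_pmf n1 p) (binomial_pmf n2 q)) (Sigma J K)" .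
  have "measure (pair_pmf (binomial_pmf n1 p) (binomial_pmf n2 q)) (Sigma J K)
      = (\<Sum>x\<in>Sigma J K. pmf (pair_pmf (binomial_pmf n1 p) (binomial_pmf n2 q)) x)"
    by (rule measure_measure_pmf_finite[OF fS])
  also have "\<dots> = (\<Sum>j\<in>J. \<Sum>k\<in>K j. pmf (binomial_pmf n1 p) j * pmf (binomial_pmf n2 q) k)"
  proof -
    have "(\<Sum>j\<in>J. \<Sum>k\<in>K j. pmf (binomial_pmf n1 p) j * pmf (binomial_pmf n2 q) k)
        = (\<Sum>(j,k)\<in>Sigma J K. pmf (binomial_pmf n1 p) j * pmf (binomial_pmf n2 q) k)"
      by (rule sum.Sigma) (use fJ fK in auto)
    also have "\<dots> = (\<Sum>x\<in>Sigma J K. pmf (pair_pmf (binomial_pmf n1 p) (binomial_pmf n2 q)) x)"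
      by (rule sum.cong) (auto simp: pmf_pair)
    finally show ?thesis by simp
  qed
  also have "\<dots> \<ge> (\<Sum>j\<in>J. (w - 1) * L)"
  proof (rule sum_mono)
    fix j assume jJ: "j \<in> J"
    have "(\<Sum>k\<in>K j. pmf (binomial_pmf n1 p) j * pmf (binomial_pmf n2 q) k) \<ge> (\<Sum>k\<in>K j. L)"
      using tm[OF jJ] by (intro sum_mono) auto
    moreover have "(\<Sum>k\<in>K j. L) = real (card (K j)) * L" by simp
    moreover have "(w - 1) * L \<le> real (card (K j)) * L" using cardK[OF jJ] Lpos by (rule mult_right_mono)
    ultimately show "(w - 1) * L \<le> (\<Sum>k\<in>K j. pmf (binomial_pmf n1 p) j * pmf (binomial_pmf n2 q) k)" by linarith
  qed
  also have "(\<Sum>j\<in>J. (w - 1) * L) = real (card J) * ((w - 1) * L)" by simp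
  also have "\<dots> \<ge> (A - 1) * ((w - 1) * L)"
    using cardJ wb Lpos by (intro mult_right_mono) auto
  finally have P2: "measure (pair_pmf (binomial_pmf n1 p) (binomial_pmf n2 q)) (Sigma J K) \<ge> (A - 1) * ((w - 1) * L)" .
  define G where "G = exp (- (h^2) / (2 * V) - 4)"
  have Gpos: "G > 0" unfolding G_def by simp
  have LG: "L = c1 * c2 * exp (17/10) * G"
  proof -
    have "- (h^2) / (2 * V) - 23/10 = 17/10 + (- (h^2) / (2 * V) - 4)" by simp
    then have "exp (- (h^2) / (2 * V) - 23/10) = exp (17/10) * exp (- (h^2) / (2 * V) - 4)"
      by (simp only: exp_add)
    then show ?thesis unfolding L_def G_def by (simp only: mult_ac)
  qed
  have f1: "(995/1000) * A \<le> A - 1" using Ab by linarith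
  have f2: "(999/1000) * w \<le> w - 1" using wb by linarith
  have f3: "(3/4) / ((4005/1000) * A) \<le> c1" unfolding c1_def using Ab by (intro frac_le) auto
  have f4: "(3/4) / ((4005/1000) * B) \<le> c2" unfolding c2_def using Bb by (intro frac_le) auto
  have f5: "4145/1000 \<le> exp (17/10::real)"
  proof -
    have "1 + 17/10 + (17/10)^2 / 2 \<le> exp (17/10::real)" by (rule exp_lower_Taylor_quadratic) simp
    then show ?thesis by (simp add: power2_eq_square)
  qed
  have "((995/1000) * A) * ((999/1000) * w) * ((3/4) / ((4005/1000) * A) * ((3/4) / ((4005/1000) * B)) * (4145/1000))
      \<le> (A - 1) * (w - 1) * (c1 * c2 * exp (17/10))"
    using f1 f2 f3 f4 f5 Ab Bb wb c1pos c2pos by (intro mult_mono mult_nonneg_nonneg) auto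
  moreover have "((995/1000) * A) * ((999/1000) * w) * ((3/4) / ((4005/1000) * A) * ((3/4) / ((4005/1000) * B)) * (4145/1000))
      = (995/1000) * (999/1000) * (9/16) * (4145/1000) / ((4005/1000)^2) * (w / B)"
    using Ab Bb by (simp add: field_simps power2_eq_square)
  ultimately have M1: "(995/1000) * (999/1000) * (9/16) * (4145/1000) / ((4005/1000)^2) * (w / B)
      \<le> (A - 1) * (w - 1) * (c1 * c2 * exp (17/10))" by simp
  have M2: "sqrt V / (2 * pi * h) \<le> (995/1000) * (999/1000) * (9/16) * (4145/1000) / ((4005/1000)^2) * (w / B)"
  proof -
    have "sqrt V * B = sqrt (V * v2)" unfolding B_def by (simp add: real_sqrt_mult)
    also have "\<dots> \<le> sqrt (((72/100) * V)^2)"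
    proof (rule real_sqrt_le_mono)
      have "V * v2 \<le> V * ((101/200) * V)" using v2b Vpos by (intro mult_left_mono) auto
      also have "\<dots> \<le> ((72/100) * V)^2" using Vpos by (simp add: power2_eq_square)
      finally show "V * v2 \<le> ((72/100) * V)^2" .
    qed
    also have "\<dots> = (72/100) * V" using Vpos by simp
    finally have sVB: "sqrt V * B \<le> (72/100) * V" .
    have Bpos: "B > 0" using Bb by simp
    have pi3: "pi > 3" by (rule pi_gt3)
    have "sqrt V * B \<le> (995/1000) * (999/1000) * (9/16) * (4145/1000) / ((4005/1000)^2) * V * (2 * pi)"
    proof -
      have k: "(72/100::real) \<le> (995/1000) * (999/1000) * (9/16) * (4145/1000) / ((4005/1000)^2) * 6"
        by (simp add: power2_eq_square)
      have "(72/100) * V \<le> ((995/1000) * (999/1000) * (9/16) * (4145/1000) / ((4005/1000)^2) * 6) * V"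
        using Vpos k by (intro mult_right_mono) auto
      then have "(72/100) * V \<le> (995/1000) * (999/1000) * (9/16) * (4145/1000) / ((4005/1000)^2) * V * 6"
        by (simp only: mult_ac)
      also have "\<dots> \<le> (995/1000) * (999/1000) * (9/16) * (4145/1000) / ((4005/1000)^2) * V * (2 * pi)"
        using Vpos pi3 by (intro mult_left_mono) auto
      finally show ?thesis using sVB by linarith
    qed
    then show ?thesis unfolding w_def using Bpos h0 Vpos
      by (simp add: field_simps)
  qed
  have "sqrt V / (2 * pi * h) * exp (- (h^2) / (2 * V) - 4) \<le> (A - 1) * (w - 1) * (c1 * c2 * exp (17/10)) * G"
    unfolding G_def[symmetric] using M1 M2 Gpos by (intro mult_right_mono) auto
  also have "\<dots> = (A - 1) * ((w - 1) * L)" unfolding LG by (simp add: mult_ac)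
  finally show ?thesis using P1 P2 by linarith
qed


theorem mainTheorem11:
  fixes n1 n2 :: "nat \<Rightarrow> nat" and p h :: "nat \<Rightarrow> real"
  defines "N \<equiv> (\<lambda>m. (real (n1 m) + real (n2 m)) / 2)"
      and "S \<equiv> (\<lambda>m. (real (n2 m) - real (n1 m)) / 2)"
  assumes N_inf: "filterlim N at_top sequentially"
      and p_range: "\<forall>m. 0 \<le> p m \<and> p m \<le> 1"
      and var_inf: "filterlim (\<lambda>m. p m * (1 - p m) * N m) at_top sequentially"
      and h_lower: "\<forall>m. 2 * sqrt (2 * p m * (1 - p m) * N m) < h m"
      and h_upper: "h \<in> o(\<lambda>m. (p m * (1 - p m) * N m) powr (2/3))"
      and hS: "(\<lambda>m. h m * S m) \<in> o(\<lambda>m. N m * sqrt (p m * (1 - p m) * N m))"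
  shows "\<exists>\<epsilon> :: nat \<Rightarrow> real. \<epsilon> \<longlonglongrightarrow> 0 \<and>
           (\<forall>\<^sub>F m in sequentially.
              binom_sum_tail (n1 m) (n2 m) (p m)
                 (real (n1 m) * p m + real (n2 m) * (1 - p m) + h m)
              > sqrt (2 * p m * (1 - p m) * N m) / (2 * pi * h m)
                * exp (- (h m)\<^sup>2 / (4 * p m * (1 - p m) * N m) - 4 - \<epsilon> m))"
proof -
  define W where "W = (\<lambda>m. p m * (1 - p m) * N m)"
  have ev1: "eventually (\<lambda>m. 50000 \<le> W m) sequentially"
    using var_inf unfolding W_def filterlim_at_top by blast
  have ev2: "eventually (\<lambda>m. \<bar>h m\<bar> \<le> (1/100) * \<bar>W m powr (2/3)\<bar>) sequentially"
    using landau_o.smallD[OF h_upper, of "1/100"] unfolding W_def by simp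
  have ev3: "eventually (\<lambda>m. \<bar>h m * S m\<bar> \<le> (1/100) * \<bar>N m * sqrt (W m)\<bar>) sequentially"
    using landau_o.smallD[OF hS, of "1/100"] unfolding W_def by simp
  have key: "eventually (\<lambda>m. binom_sum_tail (n1 m) (n2 m) (p m)
                 (real (n1 m) * p m + real (n2 m) * (1 - p m) + h m)
              \<ge> sqrt (2 * p m * (1 - p m) * N m) / (2 * pi * h m)
                * exp (- (h m)\<^sup>2 / (4 * p m * (1 - p m) * N m) - 4)
              \<and> 0 < sqrt (2 * p m * (1 - p m) * N m) / (2 * pi * h m)) sequentially"
    using ev1 ev2 ev3
  proof eventually_elim
    case (elim m)
    define pp where "pp = p m"
    define hh where "hh = h m"
    define V where "V = (real (n1 m) + real (n2 m)) * pp * (1 - pp)"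
    have W0: "W m > 0" using elim(1) by simp
    have Wm: "W m = pp * (1 - pp) * ((real (n1 m) + real (n2 m)) / 2)"
      unfolding W_def N_def pp_def by simp
    have VW: "V = 2 * W m" unfolding V_def Wm by (simp add: algebra_simps)
    have VN: "2 * p m * (1 - p m) * N m = V" unfolding V_def N_def pp_def by (simp add: field_simps)
    have VN4: "4 * p m * (1 - p m) * N m = 2 * V" unfolding V_def N_def pp_def by (simp add: field_simps)
    have pr: "0 \<le> pp" "pp \<le> 1" using p_range unfolding pp_def by auto
    have pp0: "pp \<noteq> 0" using W0 unfolding Wm by auto
    have pp1: "pp \<noteq> 1" using W0 unfolding Wm by auto
    have p01: "0 < pp" "pp < 1" using pr pp0 pp1 by auto
    have Vpos: "V > 0" using VW W0 by simp
    have hV: "2 * sqrt V < hh" using h_lower VN unfolding hh_def by metis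
    have Vbig: "100000 \<le> V" using VW elim(1) by simp
    have sW: "sqrt (W m) \<le> hh"
    proof -
      have "sqrt (W m) \<le> sqrt V" using VW W0 by (intro real_sqrt_le_mono) simp
      moreover have "0 \<le> sqrt V" using Vpos by simp
      ultimately show ?thesis using hV by linarith
    qed
    have hpos: "hh > 0" using sW W0 by (smt (verit) real_sqrt_gt_zero)
    have h3: "hh^3 \<le> V^2 / 100000"
    proof -
      have "\<bar>W m powr (2/3)\<bar> = W m powr (2/3)" by simp
      then have "hh \<le> (1/100) * W m powr (2/3)" using elim(2) hpos unfolding hh_def by simp
      then have "hh^3 \<le> ((1/100) * W m powr (2/3))^3" using hpos by (intro power_mono) auto
      also have "\<dots> = (1/100)^3 * (W m powr (2/3))^3" by (rule power_mult_distrib)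
      also have "(1/100::real)^3 = 1/1000000" by (simp add: power3_eq_cube)
      also have "(W m powr (2/3))^3 = W m powr 2" using W0 by (simp add: powr_power)
      also have "W m powr 2 = (W m)^2" using W0 by (simp add: powr_numeral)
      finally have "hh^3 \<le> (1/1000000) * (W m)^2" .
      moreover have "V^2 = 4 * (W m)^2" unfolding VW by (simp add: power2_eq_square)
      ultimately show ?thesis using zero_le_power2[of "W m"] by linarith
    qed
    have Sb: "\<bar>real (n2 m) - real (n1 m)\<bar> \<le> (real (n1 m) + real (n2 m)) / 100"
    proof -
      have N0: "0 \<le> N m" unfolding N_def by simp
      have "\<bar>S m\<bar> * hh \<le> (1/100) * (N m * sqrt (W m))"
        using elim(3) N0 W0 hpos unfolding hh_def by (simp add: abs_mult mult_ac)
      also have "\<dots> \<le> (1/100) * (N m * hh)" using sW N0 by (intro mult_left_mono) auto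
      finally have "\<bar>S m\<bar> * hh \<le> ((1/100) * N m) * hh" by (simp add: mult_ac)
      then have "\<bar>S m\<bar> \<le> (1/100) * N m" using hpos by simp
      then show ?thesis unfolding S_def N_def by simp
    qed
    have C: "binom_sum_tail (n1 m) (n2 m) pp (real (n1 m) * pp + real (n2 m) * (1-pp) + hh)
           \<ge> sqrt V / (2 * pi * hh) * exp (- (hh^2) / (2 * V) - 4)"
      by (rule core[OF p01 V_def hV Vbig h3 Sb])
    show ?case
    proof
      show "binom_sum_tail (n1 m) (n2 m) (p m)
                 (real (n1 m) * p m + real (n2 m) * (1 - p m) + h m)
              \<ge> sqrt (2 * p m * (1 - p m) * N m) / (2 * pi * h m)
                * exp (- (h m)\<^sup>2 / (4 * p m * (1 - p m) * N m) - 4)"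
        using C unfolding VN VN4 pp_def hh_def by simp
      show "0 < sqrt (2 * p m * (1 - p m) * N m) / (2 * pi * h m)"
        unfolding VN using Vpos hpos unfolding hh_def by simp
    qed
  qed
  show ?thesis
  proof (intro exI[of _ "\<lambda>m. inverse (real (Suc m))"] conjI)
    show "(\<lambda>m. inverse (real (Suc m))) \<longlonglongrightarrow> 0" by (rule LIMSEQ_inverse_real_of_nat)
    show "\<forall>\<^sub>F m in sequentially.
              binom_sum_tail (n1 m) (n2 m) (p m)
                 (real (n1 m) * p m + real (n2 m) * (1 - p m) + h m)
              > sqrt (2 * p m * (1 - p m) * N m) / (2 * pi * h m)
                * exp (- (h m)\<^sup>2 / (4 * p m * (1 - p m) * N m) - 4 - inverse (real (Suc m)))"
      using key
    proof eventually_elim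
      case (elim m)
      have "exp (- (h m)\<^sup>2 / (4 * p m * (1 - p m) * N m) - 4 - inverse (real (Suc m)))
          < exp (- (h m)\<^sup>2 / (4 * p m * (1 - p m) * N m) - 4)" by simp
      then have "sqrt (2 * p m * (1 - p m) * N m) / (2 * pi * h m)
                * exp (- (h m)\<^sup>2 / (4 * p m * (1 - p m) * N m) - 4 - inverse (real (Suc m)))
           < sqrt (2 * p m * (1 - p m) * N m) / (2 * pi * h m)
                * exp (- (h m)\<^sup>2 / (4 * p m * (1 - p m) * N m) - 4)"
        using elim by (intro mult_strict_left_mono) auto
      then show ?case using elim by linarith
    qed
  qed
qed


end
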